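(* Let $\gamma$ be an Ehresmann connection on $M\times_NC$ whose $C$-component $\gamma_C$ is defined on $C$ (i.e. its components $\gamma^i_{jkl}$ are functions on $C$). Then the equations $\tilde\gamma_C=R^{\nabla^{(1)}}$ and $\mathrm{alt}_{12}\circ\gamma_C=\nabla^{(2)}\tau_N$ are locally equivalent to the equations $$\gamma^h_{str}-\gamma^h_{rts}=A^h_{rm}A^m_{st}-A^h_{sm}A^m_{rt},$$ $$\gamma^h_{rst}-\gamma^h_{srt}=A^h_{tm}(A^m_{rs}-A^m_{sr})+A^m_{ts}(A^h_{mr}-A^h_{rm})+A^m_{tr}(A^h_{sm}-A^h_{ms}),$$ for all indices $h,r,s,t$.
   Context: $N$ is a connected oriented $n$-manifold, $p_M\colon M\to N$ the bundle of pseudo-Riemannian metrics of a fixed signature, $p_C\colon C\to N$ the bundle of linear connections (fibre over $x$: values $\Gamma_x$ of linear connections at $x$), an affine bundle modelled on $\otimes^2T^*N\otimes TN$, so $V(p_C)\cong p_C^*(\otimes^2T^*N\otimes TN)$. Summation over repeated indices. A chart $(x^i)$ induces coordinates $(x^i,y_{ij})$ on $M$ and $(x^i,A^i_{jk})$ on $C$, $A^i_{jk}(\Gamma_x)=\Gamma^i_{jk}(x)$ (Christoffel symbols, $\nabla_{\partial_j}\partial_k=\Gamma^i_{jk}\partial_i$). An Ehresmann connection on $M\times_NC\to N$ is locally $\gamma=\sum_{i\le j}(dy_{ij}+\gamma_{ijk}dx^k)\otimes\partial/\partial y_{ij}+(dA^i_{jk}+\gamma^i_{jkl}dx^l)\otimes\partial/\partial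 A^i_{jk}$; its $C$-component is $\gamma_C=(dA^i_{jk}+\gamma^i_{jkl}dx^l)\otimes\partial/\partial A^i_{jk}$, viewed when defined on $C$ as a homomorphism $TC\to p_C^*(\otimes^2T^*N\otimes TN)$, $\gamma_C=(dA^i_{jk}+\gamma^i_{jkl}dx^l)\otimes dx^j\otimes dx^k\otimes\partial/\partial x^i$. The 2-form $\tilde\gamma_C$ on $C$ with values in $p_C^*(T^*N\otimes TN)$ is $\tilde\gamma_C(X,Y)=c^1_1((p_C)_*Y\otimes\gamma_C(X))-c^1_1((p_C)_*X\otimes\gamma_C(Y))$, where $c^1_1(X_1\otimes w_1\otimes w_2\otimes X_2)=w_1(X_1)\,w_2\otimes X_2$. For a tensorial vector bundle $E\to N$, the canonical covariant derivative $\nabla^E$ on $p_C^*E$ is determined by $((\nabla^E)_X(f\xi))(\Gamma_x)=(Xf)(\Gamma_x)\xi(x)+f(\Gamma_x)(\nabla^{\Gamma_x}_{(p_C)_*X}\xi)(x)$ for $X\in T_{\Gamma_x}C$, $f\in C^\infty(C)$, $\xi$ a local section of $E$, where $\nabla^{\Gamma_x}$ is the covariant derivative induced on $E$ by (any linear connection with value) $\Gamma_x$. $\nabla^{(1)}=\nabla^{E_1}$ with $E_1=TN$, $R^{\nabla^{(1)}}$ its curvature (a 2-form on $C$ with values in $p_C^*(T^*N\otimes TN)$), and $\nabla^{(2)}=\nabla^{E_2}$ with $E_2=\wedge^2T^*N\otimes TN$. $\tau_N$ is the section of $p_C^*(\wedge^2T^*N\otimes TN)$ given by $\tau_N(\Gamma_x)=$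 torsion of $\Gamma_x$; locally $\tau_N=\sum_{j<k}(A^i_{jk}-A^i_{kj})dx^j\wedge dx^k\otimes\partial/\partial x^i$. $\mathrm{alt}_{12}\colon\otimes^2T^*N\otimes TN\to\wedge^2T^*N\otimes TN$ alternates the two covariant arguments. *)

theory Defs
  imports "HOL-Analysis.Analysis"
begin

text \<open>Local model in a chart (x^i) of N with induced coordinates (x^i, A^i_jk) on C.
  A point of C over the chart is a pair (x, A) with x \<in> R^n and A $ i $ j $ k = A^i_jk.
  Tangent vectors to C at a point are pairs (v, a) in the same space
  (v $ l = dx^l(X), a $ i $ j $ k = dA^i_jk(X)).
  An element of T*N (x) TN is represented by T with T $ i $ k = coefficient of dx^k (x) d/dx^i;
  an element of (x)^2 T*N (x) TN by T with T $ i $ j $ k = coefficient of dx^j (x) dx^k (x) d/dx^i.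
  A section of p_C^* TN is a map C \<Rightarrow> R^n (components along d/dx^i).\<close>

type_synonym 'n cpt = "(real^'n) \<times> (real^'n^'n^'n)"

definition dd :: "('a::real_normed_vector \<Rightarrow> 'b::real_normed_vector) \<Rightarrow> 'a \<Rightarrow> 'a \<Rightarrow> 'b" where
  "dd f v = (\<lambda>P. frechet_derivative f (at P) v)"

definition smooth_on :: "'a::real_normed_vector set \<Rightarrow> ('a \<Rightarrow> 'b::real_normed_vector) \<Rightarrow> bool" where
  "smooth_on U f \<longleftrightarrow> (\<forall>vs. (fold (\<lambda>v g. dd g v) vs f) differentiable_on U)"

text \<open>C-component of gamma: gamma_C(X) = (dA^i_jk(X) + g i j k l * dx^l(X)) dx^j (x) dx^k (x) d/dx^i,
  where g i j k l = gamma^i_jkl (functions on C).\<close>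
definition gammaC :: "('n \<Rightarrow> 'n \<Rightarrow> 'n \<Rightarrow> 'n \<Rightarrow> 'n::finite cpt \<Rightarrow> real) \<Rightarrow> 'n cpt \<Rightarrow> 'n cpt \<Rightarrow> real^'n^'n^'n" where
  "gammaC g P X = (\<chi> i j k. snd X $ i $ j $ k + (\<Sum>l\<in>UNIV. g i j k l P * fst X $ l))"

text \<open>tilde gamma_C(X,Y) = c11((p_C)_* Y (x) gamma_C(X)) - c11((p_C)_* X (x) gamma_C(Y)).\<close>
definition gammaC_tilde :: "('n \<Rightarrow> 'n \<Rightarrow> 'n \<Rightarrow> 'n \<Rightarrow> 'n::finite cpt \<Rightarrow> real) \<Rightarrow> 'n cpt \<Rightarrow> 'n cpt \<Rightarrow> 'n cpt \<Rightarrow> real^'n^'n" where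
  "gammaC_tilde g P X Y = (\<chi> i k. (\<Sum>j\<in>UNIV. fst Y $ j * gammaC g P X $ i $ j $ k
                                          - fst X $ j * gammaC g P Y $ i $ j $ k))"

definition endo_apply :: "real^'n^'n \<Rightarrow> real^'n \<Rightarrow> real^'n::finite" where
  "endo_apply T w = (\<chi> i. \<Sum>k\<in>UNIV. T $ i $ k * w $ k)"

text \<open>Canonical covariant derivative nabla^(1) on p_C^* TN:
  (nabla_X xi)(Gamma_x) = X(xi^i) d/dx^i + xi^k nabla^{Gamma_x}_{(p_C)_* X} d/dx^k,
  with nabla^{Gamma}_{d/dx^j} d/dx^k = Gamma^i_jk d/dx^i.\<close>
definition nabla1 :: "('n::finite cpt \<Rightarrow> 'n cpt) \<Rightarrow> ('n cpt \<Rightarrow> real^'n) \<Rightarrow> 'n cpt \<Rightarrow> real^'n" where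
  "nabla1 X xi = (\<lambda>P. dd xi (X P) P
      + (\<chi> i. \<Sum>j\<in>UNIV. \<Sum>k\<in>UNIV. snd P $ i $ j $ k * fst (X P) $ j * xi P $ k))"

definition lie_bracket :: "('a::real_normed_vector \<Rightarrow> 'a) \<Rightarrow> ('a \<Rightarrow> 'a) \<Rightarrow> 'a \<Rightarrow> 'a" where
  "lie_bracket X Y = (\<lambda>P. dd Y (X P) P - dd X (Y P) P)"

definition curv1 :: "('n::finite cpt \<Rightarrow> 'n cpt) \<Rightarrow> ('n cpt \<Rightarrow> 'n cpt) \<Rightarrow> ('n cpt \<Rightarrow> real^'n) \<Rightarrow> 'n cpt \<Rightarrow> real^'n" where
  "curv1 X Y xi = (\<lambda>P. nabla1 X (nabla1 Y xi) P - nabla1 Y (nabla1 X xi) P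
                       - nabla1 (lie_bracket X Y) xi P)"

text \<open>Canonical covariant derivative nabla^(2) on p_C^*(wedge^2 T*N (x) TN) (applied to sections
  S with S $ i $ j $ k = S(d/dx^j, d/dx^k)^i), using the connection induced by Gamma_x on
  tensors: (nabla_v S)^i_jk = v(S^i_jk) + v^l (Gamma^i_lm S^m_jk - Gamma^m_lj S^i_mk - Gamma^m_lk S^i_jm).\<close>
definition nabla2 :: "('n::finite cpt \<Rightarrow> real^'n^'n^'n) \<Rightarrow> 'n cpt \<Rightarrow> 'n cpt \<Rightarrow> real^'n^'n^'n" where
  "nabla2 S P X = (\<chi> i j k. frechet_derivative (\<lambda>Q. S Q $ i $ j $ k) (at P) X
      + (\<Sum>l\<in>UNIV. \<Sum>m\<in>UNIV. fst X $ l *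
           (snd P $ i $ l $ m * S P $ m $ j $ k - snd P $ m $ l $ j * S P $ i $ m $ k
            - snd P $ m $ l $ k * S P $ i $ j $ m)))"

definition tauN :: "'n::finite cpt \<Rightarrow> real^'n^'n^'n" where
  "tauN P = (\<chi> i j k. snd P $ i $ j $ k - snd P $ i $ k $ j)"

definition alt12 :: "real^'n^'n^'n \<Rightarrow> real^'n^'n^'n::finite" where
  "alt12 T = (\<chi> i j k. T $ i $ j $ k - T $ i $ k $ j)"

end

theory Submission
  imports Defs
begin


lemma smooth_diff: assumes "smooth_on U f" "open U" "Q \<in> U" shows "f differentiable (at Q)"
proof -
  have "fold (\<lambda>v g. dd g v) [] f differentiable_on U" using assms(1)[unfolded smooth_on_def, rule_format, of "[]"] .
  then have "f differentiable_on U" by (simp only: fold_simps(1) id_apply)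
  then have "f differentiable (at Q within U)" using assms(3) unfolding differentiable_on_def by blast
  then show ?thesis unfolding at_within_open[OF assms(3,2)] .
qed

lemma smooth_dd: "smooth_on U f \<Longrightarrow> smooth_on U (dd f v)"
  unfolding smooth_on_def
proof
  fix vs assume "\<forall>vs. fold (\<lambda>v g. dd g v) vs f differentiable_on U"
  then have "fold (\<lambda>v g. dd g v) (v#vs) f differentiable_on U" by blast
  then show "fold (\<lambda>v g. dd g v) vs (dd f v) differentiable_on U" by simp
qed

lemma dd_const: "dd (\<lambda>_. c) v = (\<lambda>_. 0)"
  unfolding dd_def
  using frechet_derivative_at[OF has_derivative_const[of c "at _"]] by (auto simp: fun_eq_iff) 

lemma fold_const: "\<exists>c'. fold (\<lambda>v g. dd g v) vs (\<lambda>_. c) = (\<lambda>_. c')"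
  by (induction vs arbitrary: c) (auto simp: dd_const)

lemma smooth_const: "smooth_on (U::'a::real_normed_vector set) (\<lambda>_. c::'b::real_normed_vector)"
  unfolding smooth_on_def
proof
  fix vs
  obtain c' where "fold (\<lambda>v g. dd g v) vs (\<lambda>_::'a. c) = (\<lambda>_. c')" using fold_const by blast
  then show "fold (\<lambda>v g. dd g v) vs (\<lambda>_::'a. c) differentiable_on U"
    by (simp add: differentiable_on_def differentiable_const)
qed

lemma vec_lambda_deriv:
  fixes f :: "'i::finite \<Rightarrow> 'a::real_normed_vector \<Rightarrow> real"
  assumes "\<And>i. (f i has_derivative f' i) F"
  shows "((\<lambda>x. \<chi> i. f i x) has_derivative (\<lambda>h. \<chi> i. f' i h)) F"
proof -
  have e: "(\<chi> i. h i) = (\<Sum>i\<in>UNIV. h i *\<^sub>R axis i (1::real))" for h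
    using basis_expansion[of "\<chi> i. h i"] by (simp only: vec_lambda_beta scalar_mult_eq_scaleR)
  have A: "(\<lambda>x. \<chi> i. f i x) = (\<lambda>x. \<Sum>i\<in>UNIV. f i x *\<^sub>R axis i (1::real))" by (rule ext) (rule e)
  have B: "(\<lambda>x. \<chi> i. f' i x) = (\<lambda>x. \<Sum>i\<in>UNIV. f' i x *\<^sub>R axis i (1::real))" by (rule ext) (rule e)
  show ?thesis unfolding A B
    by (intro has_derivative_sum has_derivative_scaleR_left assms)
qed

lemma nth_deriv: "(f has_derivative f') F \<Longrightarrow> ((\<lambda>x. f x $ i) has_derivative (\<lambda>h. f' h $ i)) F"
  by (rule bounded_linear.has_derivative[OF bounded_linear_vec_nth])

lemma dd_at: "(f has_derivative f') (at P) \<Longrightarrow> dd f v P = f' v"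
  unfolding dd_def using frechet_derivative_at by metis

lemma dd_works: "f differentiable (at P) \<Longrightarrow> (f has_derivative (\<lambda>v. dd f v P)) (at P)"
  unfolding dd_def by (simp add: frechet_derivative_works)

lemma dd_linear: "f differentiable (at P) \<Longrightarrow> linear (\<lambda>v. dd f v P)"
  using dd_works has_derivative_linear by blast

lemma line_deriv:
  fixes f :: "'a::real_normed_vector \<Rightarrow> real^'n::finite"
  assumes "f differentiable (at (x + s *\<^sub>R v))"
  shows "((\<lambda>t. f (x + t *\<^sub>R v) $ i) has_real_derivative (dd f v (x + s *\<^sub>R v) $ i)) (at s)"
proof -
  have d: "(f has_derivative (\<lambda>w. dd f w (x + s *\<^sub>R v))) (at (x + s *\<^sub>R v))" using dd_works[OF assms] .
  have l0: "((\<lambda>t. x + t *\<^sub>R v) has_derivative (\<lambda>t. 0 + t *\<^sub>R v)) (at s)"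
    by (rule has_derivative_add[OF has_derivative_const has_derivative_scaleR_left[OF has_derivative_ident]])
  have l: "((\<lambda>t. x + t *\<^sub>R v) has_derivative (\<lambda>t. t *\<^sub>R v)) (at s)" using l0 by (simp only: add_0_left)
  have dv: "((\<lambda>t. f (x + t *\<^sub>R v)) has_derivative (\<lambda>t. dd f (t *\<^sub>R v) (x + s *\<^sub>R v))) (at s)"
    using diff_chain_at[OF l d] unfolding o_def .
  have dvi: "((\<lambda>t. f (x + t *\<^sub>R v) $ i) has_derivative (\<lambda>t. dd f (t *\<^sub>R v) (x + s *\<^sub>R v) $ i)) (at s)"
    by (rule nth_deriv[OF dv])
  have lin: "linear (\<lambda>w. dd f w (x + s *\<^sub>R v))" by (rule dd_linear[OF assms])
  have eq: "(\<lambda>t. dd f (t *\<^sub>R v) (x + s *\<^sub>R v) $ i) = (*) (dd f v (x + s *\<^sub>R v) $ i)"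
  proof
    fix t show "dd f (t *\<^sub>R v) (x + s *\<^sub>R v) $ i = dd f v (x + s *\<^sub>R v) $ i * t"
      using linear_cmul[OF lin, of t v] by (simp add: mult.commute)
  qed
  show ?thesis unfolding has_field_derivative_def using dvi unfolding eq .
qed

lemma absaux: "\<bar>x - a1\<bar> < \<bar>a1 - a2\<bar>/3 \<Longrightarrow> \<bar>y - a2\<bar> < \<bar>a1 - a2\<bar>/3 \<Longrightarrow> x = y \<Longrightarrow> 0 < \<bar>a1 - a2\<bar>/3 \<Longrightarrow> False"
  for x y a1 a2 :: real
proof -
  assume h: "\<bar>x - a1\<bar> < \<bar>a1 - a2\<bar>/3" "\<bar>y - a2\<bar> < \<bar>a1 - a2\<bar>/3" "x = y" "0 < \<bar>a1 - a2\<bar>/3"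
  have "a1 - a2 = (y - a2) - (x - a1)" using h(3) by simp
  then have tri: "\<bar>a1 - a2\<bar> \<le> \<bar>y - a2\<bar> + \<bar>x - a1\<bar>" by (metis abs_triangle_ineq4)
  have lem: "\<And>d u w::real. d \<le> u + w \<Longrightarrow> w < d/3 \<Longrightarrow> u < d/3 \<Longrightarrow> 0 < d/3 \<Longrightarrow> False" by linarith
  show False by (rule lem[OF tri h(1) h(2) h(4)])
qed

lemma schwarz:
  fixes f :: "'a::real_normed_vector \<Rightarrow> real^'n::finite"
  assumes U: "open U" "P \<in> U"
    and df: "\<And>Q. Q \<in> U \<Longrightarrow> f differentiable (at Q)"
    and db: "\<And>Q. Q \<in> U \<Longrightarrow> dd f b differentiable (at Q)"
    and dc: "\<And>Q. Q \<in> U \<Longrightarrow> dd f c differentiable (at Q)"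
    and cb: "continuous (at P) (\<lambda>Q. dd (dd f b) c Q $ i)"
    and cc: "continuous (at P) (\<lambda>Q. dd (dd f c) b Q $ i)"
  shows "dd (dd f b) c P $ i = dd (dd f c) b P $ i"
proof (rule ccontr)
  define a1 where "a1 = dd (dd f b) c P $ i"
  define a2 where "a2 = dd (dd f c) b P $ i"
  assume "dd (dd f b) c P $ i \<noteq> dd (dd f c) b P $ i"
  then have e: "\<bar>a1 - a2\<bar>/3 > 0" by (simp add: a1_def a2_def)
  obtain d1 where d1: "d1>0" "\<And>Q. dist Q P < d1 \<Longrightarrow> dist (dd (dd f b) c Q $ i) a1 < \<bar>a1 - a2\<bar>/3"
  proof -
    have "\<exists>d>0. \<forall>Q. dist Q P < d \<longrightarrow> dist (dd (dd f b) c Q $ i) (dd (dd f b) c P $ i) < \<bar>a1 - a2\<bar>/3"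
      using cb e unfolding continuous_at_eps_delta by blast
    then show ?thesis using that unfolding a1_def[symmetric] by blast
  qed
  obtain d2 where d2: "d2>0" "\<And>Q. dist Q P < d2 \<Longrightarrow> dist (dd (dd f c) b Q $ i) a2 < \<bar>a1 - a2\<bar>/3"
  proof -
    have "\<exists>d>0. \<forall>Q. dist Q P < d \<longrightarrow> dist (dd (dd f c) b Q $ i) (dd (dd f c) b P $ i) < \<bar>a1 - a2\<bar>/3"
      using cc e unfolding continuous_at_eps_delta by blast
    then show ?thesis using that unfolding a2_def[symmetric] by blast
  qed
  obtain d3 where d3: "d3>0" "ball P d3 \<subseteq> U" using U open_contains_ball by blast
  define \<delta> where "\<delta> = min d1 (min d2 d3)"
  have dpos: "\<delta> > 0" using d1 d2 d3 by (simp add: \<delta>_def)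
  define h where "h = \<delta> / (norm b + norm c + 1)"
  have npos: "norm b + norm c + 1 > 0" by (simp add: add_nonneg_pos)
  have hpos: "h > 0" using dpos npos by (simp add: h_def)
  have hd: "h * (norm b + norm c + 1) = \<delta>" using npos by (simp add: h_def)
  define pt where "pt s t = P + s *\<^sub>R b + t *\<^sub>R c" for s t
  have ptd: "dist (pt s t) P < \<delta>" if "0 \<le> s" "s \<le> h" "0 \<le> t" "t \<le> h" for s t
  proof -
    have "dist (pt s t) P = norm (s *\<^sub>R b + t *\<^sub>R c)" by (simp add: pt_def dist_norm)
    also have "\<dots> \<le> s * norm b + t * norm c"
      using norm_triangle_ineq[of "s *\<^sub>R b" "t *\<^sub>R c"] that by simp
    also have "\<dots> \<le> h * norm b + h * norm c"
      using that by (intro add_mono mult_right_mono) auto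
    also have "\<dots> < h * (norm b + norm c + 1)" using hpos by (simp add: algebra_simps)
    finally show ?thesis using hd by simp
  qed
  have ptU: "pt s t \<in> U" if "0 \<le> s" "s \<le> h" "0 \<le> t" "t \<le> h" for s t
    using ptd[OF that] d3 by (auto simp: \<delta>_def dist_commute)
  define \<Delta> where "\<Delta> = f (pt h h) $ i - f (pt h 0) $ i - f (pt 0 h) $ i + f (pt 0 0) $ i"
  have pt1: "pt s t = (P + t *\<^sub>R c) + s *\<^sub>R b" for s t by (simp add: pt_def algebra_simps)
  have pt2: "pt s t = (P + s *\<^sub>R b) + t *\<^sub>R c" for s t by (simp add: pt_def algebra_simps)
  obtain s1 where s1: "0 < s1" "s1 < h" "\<Delta> = h * (dd f b (pt s1 h) $ i - dd f b (pt s1 0) $ i)"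
  proof -
    have "\<exists>z. 0 < z \<and> z < h \<and> (f (pt h h) $ i - f (pt h 0) $ i) - (f (pt 0 h) $ i - f (pt 0 0) $ i)
            = (h - 0) * (dd f b (pt z h) $ i - dd f b (pt z 0) $ i)"
    proof (rule MVT2[OF hpos])
      fix x assume x: "0 \<le> x" "x \<le> h"
      have a: "((\<lambda>s. f (pt s h) $ i) has_real_derivative dd f b (pt x h) $ i) (at x)"
        unfolding pt1 by (rule line_deriv) (use ptU[of x h] x hpos df pt1 in auto)
      have b: "((\<lambda>s. f (pt s 0) $ i) has_real_derivative dd f b (pt x 0) $ i) (at x)"
        unfolding pt1 by (rule line_deriv) (use ptU[of x 0] x hpos df pt1 in auto)
      show "((\<lambda>s. f (pt s h) $ i - f (pt s 0) $ i) has_real_derivative (dd f b (pt x h) $ i - dd f b (pt x 0) $ i)) (at x)"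
        using DERIV_diff[OF a b] .
    qed
    then show ?thesis using that by (auto simp: \<Delta>_def)
  qed
  obtain t1 where t1: "0 < t1" "t1 < h" "dd f b (pt s1 h) $ i - dd f b (pt s1 0) $ i = h * dd (dd f b) c (pt s1 t1) $ i"
  proof -
    have "\<exists>z. 0 < z \<and> z < h \<and> dd f b (pt s1 h) $ i - dd f b (pt s1 0) $ i = (h - 0) * dd (dd f b) c (pt s1 z) $ i"
    proof (rule MVT2[OF hpos])
      fix x assume x: "0 \<le> x" "x \<le> h"
      show "((\<lambda>t. dd f b (pt s1 t) $ i) has_real_derivative dd (dd f b) c (pt s1 x) $ i) (at x)"
        unfolding pt2 by (rule line_deriv) (use ptU[of s1 x] x s1 db pt2 in auto)
    qed
    then show ?thesis using that by auto
  qed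
  obtain t2 where t2: "0 < t2" "t2 < h" "\<Delta> = h * (dd f c (pt h t2) $ i - dd f c (pt 0 t2) $ i)"
  proof -
    have "\<exists>z. 0 < z \<and> z < h \<and> (f (pt h h) $ i - f (pt 0 h) $ i) - (f (pt h 0) $ i - f (pt 0 0) $ i)
            = (h - 0) * (dd f c (pt h z) $ i - dd f c (pt 0 z) $ i)"
    proof (rule MVT2[OF hpos])
      fix x assume x: "0 \<le> x" "x \<le> h"
      have a: "((\<lambda>t. f (pt h t) $ i) has_real_derivative dd f c (pt h x) $ i) (at x)"
        unfolding pt2 by (rule line_deriv) (use ptU[of h x] x hpos df pt2 in auto)
      have b: "((\<lambda>t. f (pt 0 t) $ i) has_real_derivative dd f c (pt 0 x) $ i) (at x)"
        unfolding pt2 by (rule line_deriv) (use ptU[of 0 x] x hpos df pt2 in auto)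
      show "((\<lambda>t. f (pt h t) $ i - f (pt 0 t) $ i) has_real_derivative (dd f c (pt h x) $ i - dd f c (pt 0 x) $ i)) (at x)"
        using DERIV_diff[OF a b] .
    qed
    then show ?thesis using that by (auto simp: \<Delta>_def)
  qed
  obtain s2 where s2: "0 < s2" "s2 < h" "dd f c (pt h t2) $ i - dd f c (pt 0 t2) $ i = h * dd (dd f c) b (pt s2 t2) $ i"
  proof -
    have "\<exists>z. 0 < z \<and> z < h \<and> dd f c (pt h t2) $ i - dd f c (pt 0 t2) $ i = (h - 0) * dd (dd f c) b (pt z t2) $ i"
    proof (rule MVT2[OF hpos])
      fix x assume x: "0 \<le> x" "x \<le> h"
      show "((\<lambda>s. dd f c (pt s t2) $ i) has_real_derivative dd (dd f c) b (pt x t2) $ i) (at x)"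
        unfolding pt1 by (rule line_deriv) (use ptU[of x t2] x t2 dc pt1 in auto)
    qed
    then show ?thesis using that by auto
  qed
  have "h * h * dd (dd f b) c (pt s1 t1) $ i = h * h * dd (dd f c) b (pt s2 t2) $ i"
    using s1 t1 t2 s2 by (simp add: mult.assoc)
  then have eq: "dd (dd f b) c (pt s1 t1) $ i = dd (dd f c) b (pt s2 t2) $ i" using hpos by simp
  have "dist (pt s1 t1) P < d1" using ptd[of s1 t1] s1 t1 by (auto simp: \<delta>_def)
  then have A: "\<bar>dd (dd f b) c (pt s1 t1) $ i - a1\<bar> < \<bar>a1 - a2\<bar>/3" using d1 by (simp add: dist_real_def)
  have "dist (pt s2 t2) P < d2" using ptd[of s2 t2] s2 t2 by (auto simp: \<delta>_def)
  then have B: "\<bar>dd (dd f c) b (pt s2 t2) $ i - a2\<bar> < \<bar>a1 - a2\<bar>/3" using d2 by (simp add: dist_real_def)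
  show False using absaux[of "dd (dd f b) c (pt s1 t1) $ i" a1 a2 "dd (dd f c) b (pt s2 t2) $ i", OF A B eq e] .
qed



definition Gm :: "'n::finite cpt \<Rightarrow> 'n cpt \<Rightarrow> real^'n \<Rightarrow> real^'n" where
  "Gm P v w = (\<chi> i. \<Sum>j\<in>UNIV. \<Sum>k\<in>UNIV. snd P $ i $ j $ k * fst v $ j * w $ k)"

lemma nabla1_eq: "nabla1 X xi = (\<lambda>P. dd xi (X P) P + Gm P (X P) (xi P))"
  by (simp add: nabla1_def Gm_def fun_eq_iff)

lemma Gm_add2: "Gm P v (a + b) = Gm P v a + Gm P v b"
  by (simp add: Gm_def vec_eq_iff algebra_simps sum.distrib)

lemma Gm_diff1: "Gm P (a - b) w = Gm P a w - Gm P b w"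
  by (simp add: Gm_def vec_eq_iff algebra_simps sum_subtractf)

lemma Gm_deriv:
  assumes "(Y has_derivative Y') (at P)" "(xi has_derivative xi') (at P)"
  shows "((\<lambda>Q. Gm Q (Y Q) (xi Q)) has_derivative
     (\<lambda>w. Gm w (Y P) (xi P) + Gm P (Y' w) (xi P) + Gm P (Y P) (xi' w))) (at P)"
  unfolding Gm_def
  apply (rule has_derivative_eq_rhs)
   apply (rule vec_lambda_deriv)
   apply (rule has_derivative_sum)
   apply (rule has_derivative_sum)
   apply (rule has_derivative_mult)
    apply (rule has_derivative_mult)
     apply (rule nth_deriv)+
     apply (rule has_derivative_snd)
     apply (rule has_derivative_ident)
    apply (rule nth_deriv)
    apply (rule has_derivative_fst)
    apply (rule assms)
   apply (rule nth_deriv)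
   apply (rule assms)
  apply (simp add: fun_eq_iff vec_eq_iff sum.distrib algebra_simps)
  done

lemma lin_expand: "linear L \<Longrightarrow> L x = (\<Sum>b\<in>Basis. (x \<bullet> b) *\<^sub>R L b)"
proof -
  assume l: "linear L"
  have "L x = L (\<Sum>b\<in>Basis. (x \<bullet> b) *\<^sub>R b)" by (simp add: euclidean_representation)
  also have "\<dots> = (\<Sum>b\<in>Basis. (x \<bullet> b) *\<^sub>R L b)" by (simp add: linear_sum[OF l] linear_cmul[OF l] o_def)
  finally show ?thesis .
qed

lemma nabla1_deriv:
  fixes Y :: "'n::finite cpt \<Rightarrow> 'n cpt" and xi :: "'n cpt \<Rightarrow> real^'n"
  assumes U: "open U" "P \<in> U" and sY: "smooth_on U Y" and sx: "smooth_on U xi"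
  shows "((nabla1 Y xi) has_derivative (\<lambda>w. (\<Sum>b\<in>Basis. (Y P \<bullet> b) *\<^sub>R dd (dd xi b) w P + (dd Y w P \<bullet> b) *\<^sub>R dd xi b P)
      + (Gm w (Y P) (xi P) + Gm P (dd Y w P) (xi P) + Gm P (Y P) (dd xi w P)))) (at P)"
proof -
  have dY: "(Y has_derivative (\<lambda>w. dd Y w P)) (at P)" using dd_works[OF smooth_diff[OF sY U]] .
  have dx: "(xi has_derivative (\<lambda>w. dd xi w P)) (at P)" using dd_works[OF smooth_diff[OF sx U]] .
  have dxb: "(dd xi b has_derivative (\<lambda>w. dd (dd xi b) w P)) (at P)" for b
    using dd_works[OF smooth_diff[OF smooth_dd[OF sx] U]] .
  have S: "((\<lambda>Q. \<Sum>b\<in>Basis. (Y Q \<bullet> b) *\<^sub>R dd xi b Q) has_derivative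
      (\<lambda>w. \<Sum>b\<in>Basis. (Y P \<bullet> b) *\<^sub>R dd (dd xi b) w P + (dd Y w P \<bullet> b) *\<^sub>R dd xi b P)) (at P)"
    by (intro has_derivative_sum has_derivative_scaleR has_derivative_inner_left dY dxb)
  have eqU: "(\<Sum>b\<in>Basis. (Y Q \<bullet> b) *\<^sub>R dd xi b Q) = dd xi (Y Q) Q" if "Q \<in> U" for Q
    using lin_expand[OF dd_linear[OF smooth_diff[OF sx U(1) that]], of "Y Q"] by simp
  have S2: "((\<lambda>Q. dd xi (Y Q) Q) has_derivative
      (\<lambda>w. \<Sum>b\<in>Basis. (Y P \<bullet> b) *\<^sub>R dd (dd xi b) w P + (dd Y w P \<bullet> b) *\<^sub>R dd xi b P)) (at P)"
    by (rule has_derivative_transform_within_open[OF S U(1) U(2) eqU])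
  show ?thesis unfolding nabla1_eq
    by (rule has_derivative_add[OF S2 Gm_deriv[OF dY dx]])
qed



lemma dd2_sym:
  fixes xi :: "'a::real_normed_vector \<Rightarrow> real^'n::finite"
  assumes U: "open U" "P \<in> U" and sx: "smooth_on U xi"
  shows "dd (dd xi b) c P = dd (dd xi c) b P"
proof -
  have cont: "continuous (at P) (dd (dd xi b') c')" for b' c'
    using differentiable_imp_continuous_within[OF smooth_diff[OF smooth_dd[OF smooth_dd[OF sx]] U]] .
  show ?thesis
  proof (subst vec_eq_iff, rule allI)
    fix i
    show "dd (dd xi b) c P $ i = dd (dd xi c) b P $ i"
      by (rule schwarz[OF U smooth_diff[OF sx U(1)] smooth_diff[OF smooth_dd[OF sx] U(1)]
            smooth_diff[OF smooth_dd[OF sx] U(1)] continuous_component[OF cont] continuous_component[OF cont]])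
  qed
qed

lemma H_sym:
  fixes xi :: "'a::euclidean_space \<Rightarrow> real^'n::finite"
  assumes U: "open U" "P \<in> U" and sx: "smooth_on U xi"
  shows "(\<Sum>b\<in>Basis. (y \<bullet> b) *\<^sub>R dd (dd xi b) x P) = (\<Sum>b\<in>Basis. (x \<bullet> b) *\<^sub>R dd (dd xi b) y P)"
proof -
  have lin: "linear (\<lambda>w. dd (dd xi b) w P)" for b
    by (rule dd_linear[OF smooth_diff[OF smooth_dd[OF sx] U]])
  have sym: "dd (dd xi b) c P = dd (dd xi c) b P" for b c by (rule dd2_sym[OF U sx])
  have L: "(\<Sum>b\<in>Basis. (y \<bullet> b) *\<^sub>R dd (dd xi b) x P)
      = (\<Sum>b\<in>Basis. \<Sum>c\<in>Basis. ((y \<bullet> b) * (x \<bullet> c)) *\<^sub>R dd (dd xi b) c P)"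
  proof (rule sum.cong[OF refl])
    fix b
    have "dd (dd xi b) x P = (\<Sum>c\<in>Basis. (x \<bullet> c) *\<^sub>R dd (dd xi b) c P)"
      using lin_expand[OF lin[of b], of x] by simp
    then show "(y \<bullet> b) *\<^sub>R dd (dd xi b) x P = (\<Sum>c\<in>Basis. ((y \<bullet> b) * (x \<bullet> c)) *\<^sub>R dd (dd xi b) c P)"
      by (simp add: scaleR_sum_right)
  qed
  have R: "(\<Sum>b\<in>Basis. (x \<bullet> b) *\<^sub>R dd (dd xi b) y P)
      = (\<Sum>b\<in>Basis. \<Sum>c\<in>Basis. ((x \<bullet> b) * (y \<bullet> c)) *\<^sub>R dd (dd xi b) c P)"
  proof (rule sum.cong[OF refl])
    fix b
    have "dd (dd xi b) y P = (\<Sum>c\<in>Basis. (y \<bullet> c) *\<^sub>R dd (dd xi b) c P)"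
      using lin_expand[OF lin[of b], of y] by simp
    then show "(x \<bullet> b) *\<^sub>R dd (dd xi b) y P = (\<Sum>c\<in>Basis. ((x \<bullet> b) * (y \<bullet> c)) *\<^sub>R dd (dd xi b) c P)"
      by (simp add: scaleR_sum_right)
  qed
  have R2: "(\<Sum>b\<in>Basis. \<Sum>c\<in>Basis. ((x \<bullet> b) * (y \<bullet> c)) *\<^sub>R dd (dd xi b) c P)
      = (\<Sum>c\<in>Basis. \<Sum>b\<in>Basis. ((x \<bullet> b) * (y \<bullet> c)) *\<^sub>R dd (dd xi b) c P)"
    by (rule sum.swap)
  have R3: "(\<Sum>c\<in>Basis. \<Sum>b\<in>Basis. ((x \<bullet> b) * (y \<bullet> c)) *\<^sub>R dd (dd xi b) c P)
      = (\<Sum>b\<in>Basis. \<Sum>c\<in>Basis. ((y \<bullet> b) * (x \<bullet> c)) *\<^sub>R dd (dd xi b) c P)"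
    by (intro sum.cong refl) (simp add: sym mult.commute)
  show ?thesis using L R R2 R3 by simp
qed

lemma curv_formula:
  fixes X Y :: "'n::finite cpt \<Rightarrow> 'n cpt" and xi :: "'n cpt \<Rightarrow> real^'n"
  assumes U: "open U" "P \<in> U" and sX: "smooth_on U X" and sY: "smooth_on U Y" and sx: "smooth_on U xi"
  shows "curv1 X Y xi P = Gm (X P) (Y P) (xi P) - Gm (Y P) (X P) (xi P)
           + Gm P (X P) (Gm P (Y P) (xi P)) - Gm P (Y P) (Gm P (X P) (xi P))"
proof -
  have d1: "dd (nabla1 Y xi) (X P) P = (\<Sum>b\<in>Basis. (Y P \<bullet> b) *\<^sub>R dd (dd xi b) (X P) P + (dd Y (X P) P \<bullet> b) *\<^sub>R dd xi b P)
      + (Gm (X P) (Y P) (xi P) + Gm P (dd Y (X P) P) (xi P) + Gm P (Y P) (dd xi (X P) P))"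
    using dd_at[OF nabla1_deriv[OF U sY sx]] .
  have d2: "dd (nabla1 X xi) (Y P) P = (\<Sum>b\<in>Basis. (X P \<bullet> b) *\<^sub>R dd (dd xi b) (Y P) P + (dd X (Y P) P \<bullet> b) *\<^sub>R dd xi b P)
      + (Gm (Y P) (X P) (xi P) + Gm P (dd X (Y P) P) (xi P) + Gm P (X P) (dd xi (Y P) P))"
    using dd_at[OF nabla1_deriv[OF U sX sx]] .
  have lx: "linear (\<lambda>w. dd xi w P)" by (rule dd_linear[OF smooth_diff[OF sx U]])
  have e1: "(\<Sum>b\<in>Basis. (dd Y (X P) P \<bullet> b) *\<^sub>R dd xi b P) = dd xi (dd Y (X P) P) P"
    using lin_expand[OF lx, of "dd Y (X P) P"] by simp
  have e2: "(\<Sum>b\<in>Basis. (dd X (Y P) P \<bullet> b) *\<^sub>R dd xi b P) = dd xi (dd X (Y P) P) P"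
    using lin_expand[OF lx, of "dd X (Y P) P"] by simp
  have h: "(\<Sum>b\<in>Basis. (Y P \<bullet> b) *\<^sub>R dd (dd xi b) (X P) P) = (\<Sum>b\<in>Basis. (X P \<bullet> b) *\<^sub>R dd (dd xi b) (Y P) P)"
    by (rule H_sym[OF U sx])
  have ldiff: "dd xi (a - b) P = dd xi a P - dd xi b P" for a b using linear_diff[OF lx] by simp
  have n1: "nabla1 X (nabla1 Y xi) P = dd (nabla1 Y xi) (X P) P + Gm P (X P) (nabla1 Y xi P)"
    unfolding nabla1_eq[of X "nabla1 Y xi"] by simp
  have n3: "nabla1 Y (nabla1 X xi) P = dd (nabla1 X xi) (Y P) P + Gm P (Y P) (nabla1 X xi P)"
    unfolding nabla1_eq[of Y "nabla1 X xi"] by simp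
  have n2: "nabla1 Y xi P = dd xi (Y P) P + Gm P (Y P) (xi P)" unfolding nabla1_eq by simp
  have n4: "nabla1 X xi P = dd xi (X P) P + Gm P (X P) (xi P)" unfolding nabla1_eq by simp
  have n5: "nabla1 (lie_bracket X Y) xi P = dd xi (dd Y (X P) P - dd X (Y P) P) P
       + Gm P (dd Y (X P) P - dd X (Y P) P) (xi P)"
    unfolding nabla1_eq lie_bracket_def by simp
  show ?thesis
    unfolding curv1_def n1 n3 n5 d1 d2 n2 n4 sum.distrib e1 e2 h ldiff Gm_add2 Gm_diff1
    by (simp add: algebra_simps)
qed



definition NF :: "('n::finite \<Rightarrow> 'n \<Rightarrow> 'n \<Rightarrow> real) \<Rightarrow> real^'n \<Rightarrow> real^'n \<Rightarrow> real^'n \<Rightarrow> real" where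
  "NF c u v w = (\<Sum>l\<in>UNIV. \<Sum>j\<in>UNIV. \<Sum>k\<in>UNIV. c l j k * (u$l * v$j * w$k))"

lemma rot3: "(\<Sum>a\<in>A. \<Sum>b\<in>B. \<Sum>c\<in>C. f a b c) = (\<Sum>b\<in>B. \<Sum>c\<in>C. \<Sum>a\<in>A. f a b c)"
proof -
  have "(\<Sum>a\<in>A. \<Sum>b\<in>B. \<Sum>c\<in>C. f a b c) = (\<Sum>b\<in>B. \<Sum>a\<in>A. \<Sum>c\<in>C. f a b c)" by (rule sum.swap)
  also have "\<dots> = (\<Sum>b\<in>B. \<Sum>c\<in>C. \<Sum>a\<in>A. f a b c)" by (rule sum.cong[OF refl], rule sum.swap)
  finally show ?thesis .
qed

lemma rev3: "(\<Sum>a\<in>A. \<Sum>b\<in>B. \<Sum>c\<in>C. f a b c) = (\<Sum>c\<in>C. \<Sum>b\<in>B. \<Sum>a\<in>A. f a b c)"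
proof -
  have "(\<Sum>a\<in>A. \<Sum>b\<in>B. \<Sum>c\<in>C. f a b c) = (\<Sum>b\<in>B. \<Sum>a\<in>A. \<Sum>c\<in>C. f a b c)" by (rule sum.swap)
  also have "\<dots> = (\<Sum>b\<in>B. \<Sum>c\<in>C. \<Sum>a\<in>A. f a b c)" by (rule sum.cong[OF refl], rule sum.swap)
  also have "\<dots> = (\<Sum>c\<in>C. \<Sum>b\<in>B. \<Sum>a\<in>A. f a b c)" by (rule sum.swap)
  finally show ?thesis .
qed

lemma PG1: "(\<Sum>k\<in>UNIV. \<Sum>j\<in>UNIV. \<Sum>l\<in>UNIV. G j k l * v$j * u$l * w$k) = NF (\<lambda>l j k. G j k l) u v w"
  unfolding NF_def rev3[of "\<lambda>k j l. G j k l * v$j * u$l * w$k"]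
  by (intro sum.cong refl) (simp add: mult_ac)

lemma PG2: "(\<Sum>k\<in>UNIV. \<Sum>j\<in>UNIV. \<Sum>l\<in>UNIV. G j k l * u$j * v$l * w$k) = NF (\<lambda>l j k. G l k j) u v w"
  unfolding NF_def rot3[of "\<lambda>k j l. G j k l * u$j * v$l * w$k"]
  by (intro sum.cong refl) (simp add: mult_ac)

lemma NF_diff: "NF c1 u v w - NF c2 u v w = NF (\<lambda>l j k. c1 l j k - c2 l j k) u v w"
  by (simp add: NF_def sum_subtractf left_diff_distrib)

lemma PC1: "Gm P x (Gm P y w) $ i = NF (\<lambda>l j k. \<Sum>m\<in>UNIV. snd P$i$l$m * snd P$m$j$k) (fst x) (fst y) w"
proof -
  have "Gm P x (Gm P y w) $ i = (\<Sum>l\<in>UNIV. \<Sum>m\<in>UNIV. \<Sum>j\<in>UNIV. \<Sum>k\<in>UNIV.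
      snd P$i$l$m * snd P$m$j$k * (fst x$l * fst y$j * w$k))"
    by (simp add: Gm_def sum_distrib_left mult_ac)
  also have "\<dots> = (\<Sum>l\<in>UNIV. \<Sum>j\<in>UNIV. \<Sum>k\<in>UNIV. \<Sum>m\<in>UNIV.
      snd P$i$l$m * snd P$m$j$k * (fst x$l * fst y$j * w$k))"
    by (rule sum.cong[OF refl], rule rot3)
  also have "\<dots> = NF (\<lambda>l j k. \<Sum>m\<in>UNIV. snd P$i$l$m * snd P$m$j$k) (fst x) (fst y) w"
    by (simp add: NF_def sum_distrib_right)
  finally show ?thesis .
qed

lemma PC2: "Gm P y (Gm P x w) $ i = NF (\<lambda>l j k. \<Sum>m\<in>UNIV. snd P$i$j$m * snd P$m$l$k) (fst x) (fst y) w"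
proof -
  have "Gm P y (Gm P x w) $ i = (\<Sum>j\<in>UNIV. \<Sum>m\<in>UNIV. \<Sum>l\<in>UNIV. \<Sum>k\<in>UNIV.
      snd P$i$j$m * snd P$m$l$k * (fst x$l * fst y$j * w$k))"
    by (simp add: Gm_def sum_distrib_left mult_ac)
  also have "\<dots> = (\<Sum>j\<in>UNIV. \<Sum>l\<in>UNIV. \<Sum>k\<in>UNIV. \<Sum>m\<in>UNIV.
      snd P$i$j$m * snd P$m$l$k * (fst x$l * fst y$j * w$k))"
    by (rule sum.cong[OF refl], rule rot3)
  also have "\<dots> = (\<Sum>l\<in>UNIV. \<Sum>j\<in>UNIV. \<Sum>k\<in>UNIV. \<Sum>m\<in>UNIV.
      snd P$i$j$m * snd P$m$l$k * (fst x$l * fst y$j * w$k))"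
    by (rule sum.swap)
  also have "\<dots> = NF (\<lambda>l j k. \<Sum>m\<in>UNIV. snd P$i$j$m * snd P$m$l$k) (fst x) (fst y) w"
    by (simp add: NF_def sum_distrib_right)
  finally show ?thesis .
qed

lemma PA: "Gm x y w $ i = (\<Sum>k\<in>UNIV. \<Sum>j\<in>UNIV. snd x$i$j$k * fst y$j * w$k)"
  unfolding Gm_def vec_lambda_beta by (rule sum.swap)

lemma PL: "endo_apply (gammaC_tilde g P x y) w $ i =
   (\<Sum>k\<in>UNIV. \<Sum>j\<in>UNIV. snd x$i$j$k * fst y$j * w$k) - (\<Sum>k\<in>UNIV. \<Sum>j\<in>UNIV. snd y$i$j$k * fst x$j * w$k)
   + (\<Sum>k\<in>UNIV. \<Sum>j\<in>UNIV. \<Sum>l\<in>UNIV. g i j k l P * fst y$j * fst x$l * w$k)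
   - (\<Sum>k\<in>UNIV. \<Sum>j\<in>UNIV. \<Sum>l\<in>UNIV. g i j k l P * fst x$j * fst y$l * w$k)"
  by (simp add: endo_apply_def gammaC_tilde_def gammaC_def algebra_simps sum_distrib_left sum_distrib_right
      sum_subtractf sum.distrib)

lemma NF_axis: "NF c (axis l0 1) (axis j0 1) (axis k0 1) = c l0 j0 k0"
proof -
  have eq: "c l j k * ((if l = l0 then 1 else 0) * (if j = j0 then 1 else 0) * (if k = k0 then 1 else 0))
     = (if k = k0 then (if j = j0 then (if l = l0 then c l j k else 0) else 0) else 0)" for l j k
    by simp
  show ?thesis unfolding NF_def axis_def vec_lambda_beta eq by simp
qed



lemma tau_hasderiv: "((\<lambda>Q. tauN Q $ i $ j $ k) has_derivative (\<lambda>X. snd X $ i $ j $ k - snd X $ i $ k $ j)) (at (P::'n::finite cpt))"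
  unfolding tauN_def vec_lambda_beta
  apply (rule has_derivative_diff)
   apply (rule nth_deriv)+
   apply (rule has_derivative_snd)
   apply (rule has_derivative_ident)
  apply (rule nth_deriv)+
  apply (rule has_derivative_snd)
  apply (rule has_derivative_ident)
  done

lemma tau_deriv: "frechet_derivative (\<lambda>Q. tauN Q $ i $ j $ k) (at (P::'n::finite cpt)) X = snd X $ i $ j $ k - snd X $ i $ k $ j"
  using fun_cong[OF frechet_derivative_at[OF tau_hasderiv[of i j k P]], of X] by simp

lemma tau_deriv': "frechet_derivative (\<lambda>Q. snd Q $ i $ j $ k - snd Q $ i $ k $ j) (at (P::'n::finite cpt)) X = snd X $ i $ j $ k - snd X $ i $ k $ j"
  using tau_deriv[of i j k P X] unfolding tauN_def vec_lambda_beta .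

lemma T1: "alt12 (gammaC g P X) $ i $ j $ k - nabla2 tauN P X $ i $ j $ k
  = (\<Sum>l\<in>UNIV. (g i j k l P - g i k j l P - (\<Sum>m\<in>UNIV. snd P$i$l$m * (snd P$m$j$k - snd P$m$k$j)
       + snd P$m$l$k * (snd P$i$m$j - snd P$i$j$m) + snd P$m$l$j * (snd P$i$k$m - snd P$i$m$k))) * fst X $ l)"
  by (simp add: alt12_def gammaC_def nabla2_def tau_deriv' tauN_def algebra_simps sum_subtractf sum.distrib
      sum_distrib_left sum_distrib_right)

lemma sum_axis: "(\<Sum>l\<in>UNIV. c l * axis l0 (1::real) $ l) = c l0"
proof -
  have eq: "c l * axis l0 (1::real) $ l = (if l = l0 then c l else 0)" for l by (simp add: axis_def)
  show ?thesis unfolding eq by simp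
qed



lemma K: "endo_apply (gammaC_tilde g P x y) w - (Gm x y w - Gm y x w + Gm P x (Gm P y w) - Gm P y (Gm P x w))
  = (\<chi> i. NF (\<lambda>l j k. g i j k l P - g i l k j P - ((\<Sum>m\<in>UNIV. snd P$i$l$m * snd P$m$j$k) - (\<Sum>m\<in>UNIV. snd P$i$j$m * snd P$m$l$k))) (fst x) (fst y) w)"
proof (subst vec_eq_iff, rule allI)
  fix i
  have lin: "NF (\<lambda>l j k. A l j k - B l j k - (C l j k - D l j k)) u v w' = NF A u v w' - NF B u v w' - (NF C u v w' - NF D u v w')" for A B C D u v w'
    by (simp add: NF_diff)
  have g1: "(\<Sum>k\<in>UNIV. \<Sum>j\<in>UNIV. \<Sum>l\<in>UNIV. g i j k l P * fst y$j * fst x$l * w$k) = NF (\<lambda>l j k. g i j k l P) (fst x) (fst y) w"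
    by (rule PG1)
  have g2: "(\<Sum>k\<in>UNIV. \<Sum>j\<in>UNIV. \<Sum>l\<in>UNIV. g i j k l P * fst x$j * fst y$l * w$k) = NF (\<lambda>l j k. g i l k j P) (fst x) (fst y) w"
    by (rule PG2)
  have c1: "Gm P x (Gm P y w) $ i = NF (\<lambda>l j k. \<Sum>m\<in>UNIV. snd P$i$l$m * snd P$m$j$k) (fst x) (fst y) w"
    by (rule PC1)
  have c2: "Gm P y (Gm P x w) $ i = NF (\<lambda>l j k. \<Sum>m\<in>UNIV. snd P$i$j$m * snd P$m$l$k) (fst x) (fst y) w"
    by (rule PC2)
  show "(endo_apply (gammaC_tilde g P x y) w - (Gm x y w - Gm y x w + Gm P x (Gm P y w) - Gm P y (Gm P x w))) $ i
    = (\<chi> i. NF (\<lambda>l j k. g i j k l P - g i l k j P - ((\<Sum>m\<in>UNIV. snd P$i$l$m * snd P$m$j$k) - (\<Sum>m\<in>UNIV. snd P$i$j$m * snd P$m$l$k))) (fst x) (fst y) w) $ i"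
    unfolding vector_minus_component vector_add_component vec_lambda_beta c1 c2
    unfolding PL PA g1 g2 lin
    by linarith
qed

lemma curv_iff:
  fixes U :: "('n::finite) cpt set"
    and g :: "'n \<Rightarrow> 'n \<Rightarrow> 'n \<Rightarrow> 'n \<Rightarrow> 'n cpt \<Rightarrow> real"
  assumes U: "open U"
  shows "(\<forall>X Y xi. smooth_on U X \<longrightarrow> smooth_on U Y \<longrightarrow> smooth_on U xi \<longrightarrow>
             (\<forall>P\<in>U. endo_apply (gammaC_tilde g P (X P) (Y P)) (xi P) = curv1 X Y xi P))
    \<longleftrightarrow> (\<forall>P\<in>U. \<forall>i j k l. g i j k l P - g i l k j P
           = (\<Sum>m\<in>UNIV. snd P$i$l$m * snd P$m$j$k - snd P$i$j$m * snd P$m$l$k))"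
proof
  assume H: "\<forall>X Y xi. smooth_on U X \<longrightarrow> smooth_on U Y \<longrightarrow> smooth_on U xi \<longrightarrow>
             (\<forall>P\<in>U. endo_apply (gammaC_tilde g P (X P) (Y P)) (xi P) = curv1 X Y xi P)"
  show "\<forall>P\<in>U. \<forall>i j k l. g i j k l P - g i l k j P
           = (\<Sum>m\<in>UNIV. snd P$i$l$m * snd P$m$j$k - snd P$i$j$m * snd P$m$l$k)"
  proof (intro ballI allI)
    fix P i j k l assume P: "P \<in> U"
    define x :: "'n cpt" where "x = (axis l 1, 0)"
    define y :: "'n cpt" where "y = (axis j 1, 0)"
    define w :: "real^'n" where "w = axis k 1"
    have e: "endo_apply (gammaC_tilde g P x y) w = curv1 (\<lambda>_. x) (\<lambda>_. y) (\<lambda>_. w) P"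
      using H[rule_format, OF smooth_const[of U x] smooth_const[of U y] smooth_const[of U w] P] .
    have c: "curv1 (\<lambda>_. x) (\<lambda>_. y) (\<lambda>_. w) P = Gm x y w - Gm y x w + Gm P x (Gm P y w) - Gm P y (Gm P x w)"
      using curv_formula[OF U P smooth_const[of U x] smooth_const[of U y] smooth_const[of U w]] .
    have z: "(\<chi> i. NF (\<lambda>l j k. g i j k l P - g i l k j P - ((\<Sum>m\<in>UNIV. snd P$i$l$m * snd P$m$j$k) - (\<Sum>m\<in>UNIV. snd P$i$j$m * snd P$m$l$k))) (fst x) (fst y) w) = 0"
      using K[of g P x y w] e c by simp
    have "NF (\<lambda>l j k. g i j k l P - g i l k j P - ((\<Sum>m\<in>UNIV. snd P$i$l$m * snd P$m$j$k) - (\<Sum>m\<in>UNIV. snd P$i$j$m * snd P$m$l$k))) (fst x) (fst y) w = 0"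
      using arg_cong[OF z, of "\<lambda>v. v $ i"] by simp
    then have "g i j k l P - g i l k j P - ((\<Sum>m\<in>UNIV. snd P$i$l$m * snd P$m$j$k) - (\<Sum>m\<in>UNIV. snd P$i$j$m * snd P$m$l$k)) = 0"
      unfolding x_def y_def w_def fst_conv NF_axis .
    then show "g i j k l P - g i l k j P
           = (\<Sum>m\<in>UNIV. snd P$i$l$m * snd P$m$j$k - snd P$i$j$m * snd P$m$l$k)"
      by (simp add: sum_subtractf)
  qed
next
  assume H: "\<forall>P\<in>U. \<forall>i j k l. g i j k l P - g i l k j P
           = (\<Sum>m\<in>UNIV. snd P$i$l$m * snd P$m$j$k - snd P$i$j$m * snd P$m$l$k)"
  show "\<forall>X Y xi. smooth_on U X \<longrightarrow> smooth_on U Y \<longrightarrow> smooth_on U xi \<longrightarrow>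
             (\<forall>P\<in>U. endo_apply (gammaC_tilde g P (X P) (Y P)) (xi P) = curv1 X Y xi P)"
  proof (intro allI impI ballI)
    fix X Y xi P
    assume sX: "smooth_on U (X :: 'n cpt \<Rightarrow> 'n cpt)" and sY: "smooth_on U (Y :: 'n cpt \<Rightarrow> 'n cpt)"
      and sx: "smooth_on U (xi :: 'n cpt \<Rightarrow> real^'n)" and P: "P \<in> U"
    have zero: "(\<lambda>l j k. g i j k l P - g i l k j P - ((\<Sum>m\<in>UNIV. snd P$i$l$m * snd P$m$j$k) - (\<Sum>m\<in>UNIV. snd P$i$j$m * snd P$m$l$k)))
        = (\<lambda>l j k. 0)" for i
      using H P by (simp add: sum_subtractf fun_eq_iff)
    have nf0: "NF (\<lambda>l j k. 0) u v w' = 0" for u v w' :: "real^'n" by (simp add: NF_def)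
    have "endo_apply (gammaC_tilde g P (X P) (Y P)) (xi P) - (Gm (X P) (Y P) (xi P) - Gm (Y P) (X P) (xi P)
        + Gm P (X P) (Gm P (Y P) (xi P)) - Gm P (Y P) (Gm P (X P) (xi P))) = 0"
      unfolding K
    proof (subst vec_eq_iff, intro allI)
      fix i
      show "(\<chi> i. NF (\<lambda>l j k. g i j k l P - g i l k j P - ((\<Sum>m\<in>UNIV. snd P$i$l$m * snd P$m$j$k) - (\<Sum>m\<in>UNIV. snd P$i$j$m * snd P$m$l$k))) (fst (X P)) (fst (Y P)) (xi P)) $ i = 0 $ i"
        unfolding vec_lambda_beta zero[of i] zero_index nf0 ..
    qed
    then show "endo_apply (gammaC_tilde g P (X P) (Y P)) (xi P) = curv1 X Y xi P"
      unfolding curv_formula[OF U P sX sY sx] by simp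
  qed
qed



lemma tors_iff:
  fixes U :: "('n::finite) cpt set"
    and g :: "'n \<Rightarrow> 'n \<Rightarrow> 'n \<Rightarrow> 'n \<Rightarrow> 'n cpt \<Rightarrow> real"
  shows "(\<forall>P\<in>U. \<forall>X. alt12 (gammaC g P X) = nabla2 tauN P X)
    \<longleftrightarrow> (\<forall>P\<in>U. \<forall>i j k l. g i j k l P - g i k j l P = (\<Sum>m\<in>UNIV. snd P$i$l$m * (snd P$m$j$k - snd P$m$k$j)
       + snd P$m$l$k * (snd P$i$m$j - snd P$i$j$m) + snd P$m$l$j * (snd P$i$k$m - snd P$i$m$k)))"
proof
  assume H: "\<forall>P\<in>U. \<forall>X. alt12 (gammaC g P X) = nabla2 tauN P X"
  show "\<forall>P\<in>U. \<forall>i j k l. g i j k l P - g i k j l P = (\<Sum>m\<in>UNIV. snd P$i$l$m * (snd P$m$j$k - snd P$m$k$j)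
       + snd P$m$l$k * (snd P$i$m$j - snd P$i$j$m) + snd P$m$l$j * (snd P$i$k$m - snd P$i$m$k))"
  proof (intro ballI allI)
    fix P i j k l assume P: "P \<in> U"
    define X :: "'n cpt" where "X = (axis l 1, 0)"
    have eqX: "alt12 (gammaC g P X) = nabla2 tauN P X" using H P by blast
    have "alt12 (gammaC g P X) $ i $ j $ k - nabla2 tauN P X $ i $ j $ k = 0"
      by (simp only: eqX diff_self)
    then have "(\<Sum>l'\<in>UNIV. (g i j k l' P - g i k j l' P - (\<Sum>m\<in>UNIV. snd P$i$l'$m * (snd P$m$j$k - snd P$m$k$j)
       + snd P$m$l'$k * (snd P$i$m$j - snd P$i$j$m) + snd P$m$l'$j * (snd P$i$k$m - snd P$i$m$k))) * axis l 1 $ l') = 0"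
      unfolding T1 X_def fst_conv .
    then show "g i j k l P - g i k j l P = (\<Sum>m\<in>UNIV. snd P$i$l$m * (snd P$m$j$k - snd P$m$k$j)
       + snd P$m$l$k * (snd P$i$m$j - snd P$i$j$m) + snd P$m$l$j * (snd P$i$k$m - snd P$i$m$k))"
      unfolding sum_axis by simp
  qed
next
  assume H: "\<forall>P\<in>U. \<forall>i j k l. g i j k l P - g i k j l P = (\<Sum>m\<in>UNIV. snd P$i$l$m * (snd P$m$j$k - snd P$m$k$j)
       + snd P$m$l$k * (snd P$i$m$j - snd P$i$j$m) + snd P$m$l$j * (snd P$i$k$m - snd P$i$m$k))"
  show "\<forall>P\<in>U. \<forall>X. alt12 (gammaC g P X) = nabla2 tauN P X"
  proof (intro ballI allI)
    fix P X assume P: "P \<in> U"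
    show "alt12 (gammaC g P X) = nabla2 tauN P X"
    proof (subst vec_eq_iff, intro allI, subst vec_eq_iff, intro allI, subst vec_eq_iff, intro allI)
      fix i j k
      have "alt12 (gammaC g P X) $ i $ j $ k - nabla2 tauN P X $ i $ j $ k = 0"
        unfolding T1 using H P by simp
      then show "alt12 (gammaC g P X) $ i $ j $ k = nabla2 tauN P X $ i $ j $ k" by simp
    qed
  qed
qed

theorem proposition4:
  fixes U :: "('n::finite) cpt set"
    and g :: "'n \<Rightarrow> 'n \<Rightarrow> 'n \<Rightarrow> 'n \<Rightarrow> 'n cpt \<Rightarrow> real"
  assumes "open U"
    and "\<forall>i j k l. smooth_on U (g i j k l)"
  shows "((\<forall>X Y xi. smooth_on U X \<longrightarrow> smooth_on U Y \<longrightarrow> smooth_on U xi \<longrightarrow>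
             (\<forall>P\<in>U. endo_apply (gammaC_tilde g P (X P) (Y P)) (xi P) = curv1 X Y xi P))
          \<and> (\<forall>P\<in>U. \<forall>X. alt12 (gammaC g P X) = nabla2 tauN P X))
     \<longleftrightarrow>
     (\<forall>P\<in>U. \<forall>h r s t.
        g h s t r P - g h r t s P
          = (\<Sum>m\<in>UNIV. snd P $ h $ r $ m * snd P $ m $ s $ t - snd P $ h $ s $ m * snd P $ m $ r $ t)
      \<and> g h r s t P - g h s r t P
          = (\<Sum>m\<in>UNIV. snd P $ h $ t $ m * (snd P $ m $ r $ s - snd P $ m $ s $ r)
                     + snd P $ m $ t $ s * (snd P $ h $ m $ r - snd P $ h $ r $ m)
                     + snd P $ m $ t $ r * (snd P $ h $ s $ m - snd P $ h $ m $ s)))"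
  unfolding curv_iff[OF assms(1), of g] tors_iff[of U g] by blast


end
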